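(* Let $X$ be a Baire topological space, $Y$ a metric space and $\mathcal F\subseteq Y^X$. (1) If $\mathcal F$ is equi-GLP, then $\mathcal F$ is equi-cliquish. (2) If $X$ is a metric space and $\mathcal F$ is equi-Baire 1, then $\mathcal F$ is equi-cliquish.
   Context: A space is Baire if every nonempty open subset is nonmeager. A family of subsets of $X$ is discrete if each point has a neighborhood meeting at most one member; $\sigma$-discrete if it is a countable union of discrete families. $\mathcal F\subseteq Y^X$ (with $(Y,d)$ metric) is equi-GLP if for every $\varepsilon>0$ there is a $\sigma$-discrete family $\mathcal A_\varepsilon$ of closed subsets of $X$ with $X=\bigcup\mathcal A_\varepsilon$ and $\operatorname{diam}f(A)\le\varepsilon$ for all $A\in\mathcal A_\varepsilon$ and all $f\in\mathcal F$; equi-cliquish if for every $\varepsilon>0$ and every nonempty open $U\subseteq X$ there is a nonempty open $O\subseteq U$ with $\operatorname{diam}f(O)<\varepsilon$ for all $f\in\mathcal F$; for $X$ metric with metric $\rho$, equi-Baire 1 if for every $\varepsilon>0$ there is $\delta_\varepsilon\colon X\to(0,\infty)$ such that for all $x,y\in X$ and $f\in\mathcal F$, $\rho(x,y)<\min\{\delta_\varepsilon(x),\delta_\varepsilon(y)\}$ implies $d(f(x),f(y))<\varepsilon$. *)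

theory Defs
  imports "HOL-Analysis.Analysis"
begin

definition nowhere_dense :: "'a::topological_space set \<Rightarrow> bool" where
  "nowhere_dense A \<longleftrightarrow> interior (closure A) = {}"

definition meager :: "'a::topological_space set \<Rightarrow> bool" where
  "meager A \<longleftrightarrow> (\<exists>\<N>. countable \<N> \<and> (\<forall>N\<in>\<N>. nowhere_dense N) \<and> A = \<Union>\<N>)"

definition baire_space :: "'a::topological_space itself \<Rightarrow> bool" where
  "baire_space _ \<longleftrightarrow> (\<forall>U::'a set. open U \<and> U \<noteq> {} \<longrightarrow> \<not> meager U)"

definition discrete_family :: "'a::topological_space set set \<Rightarrow> bool" where
  "discrete_family \<A> \<longleftrightarrow>
     (\<forall>x. \<exists>U. open U \<and> x \<in> U \<and>
        (\<forall>A\<in>\<A>. \<forall>B\<in>\<A>. A \<inter> U \<noteq> {} \<and> B \<inter> U \<noteq> {} \<longrightarrow> A = B))"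

definition sigma_discrete :: "'a::topological_space set set \<Rightarrow> bool" where
  "sigma_discrete \<A> \<longleftrightarrow> (\<exists>D::nat \<Rightarrow> 'a set set. (\<forall>n. discrete_family (D n)) \<and> \<A> = (\<Union>n. D n))"

text \<open>Diameter with values in the extended reals (sup of distances; -\<infinity> for the empty set,
  \<infinity> for unbounded sets).\<close>

definition ediam :: "'b::metric_space set \<Rightarrow> ereal" where
  "ediam S = (SUP p\<in>S \<times> S. ereal (dist (fst p) (snd p)))"

definition equi_GLP :: "('a::topological_space \<Rightarrow> 'b::metric_space) set \<Rightarrow> bool" where
  "equi_GLP \<F> \<longleftrightarrow>
     (\<forall>\<epsilon>>0. \<exists>\<A>. sigma_discrete \<A> \<and> (\<forall>A\<in>\<A>. closed A) \<and> \<Union>\<A> = UNIV \<and>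
        (\<forall>A\<in>\<A>. \<forall>f\<in>\<F>. ediam (f ` A) \<le> ereal \<epsilon>))"

definition equi_cliquish :: "('a::topological_space \<Rightarrow> 'b::metric_space) set \<Rightarrow> bool" where
  "equi_cliquish \<F> \<longleftrightarrow>
     (\<forall>\<epsilon>>0. \<forall>U. open U \<and> U \<noteq> {} \<longrightarrow>
        (\<exists>V. open V \<and> V \<noteq> {} \<and> V \<subseteq> U \<and> (\<forall>f\<in>\<F>. ediam (f ` V) < ereal \<epsilon>)))"

definition equi_Baire1 :: "('a::metric_space \<Rightarrow> 'b::metric_space) set \<Rightarrow> bool" where
  "equi_Baire1 \<F> \<longleftrightarrow>
     (\<forall>\<epsilon>>0. \<exists>\<delta>::'a \<Rightarrow> real. (\<forall>x. \<delta> x > 0) \<and>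
        (\<forall>x y. \<forall>f\<in>\<F>. dist x y < min (\<delta> x) (\<delta> y) \<longrightarrow> dist (f x) (f y) < \<epsilon>))"

end

theory Submission
  imports Defs
begin

lemma baire_cover:
  fixes U :: "'a::topological_space set" and E :: "nat \<Rightarrow> 'a set"
  assumes "baire_space TYPE('a)" "open U" "U \<noteq> {}" "U \<subseteq> (\<Union>n. E n)"
  shows "\<exists>n. interior (closure (U \<inter> E n)) \<noteq> {}"
proof (rule ccontr)
  assume "\<not> ?thesis"
  hence nd: "\<forall>n. nowhere_dense (U \<inter> E n)" by (simp add: nowhere_dense_def)
  have eq: "U = \<Union>(range (\<lambda>n. U \<inter> E n))" using assms(4) by blast
  have c: "countable (range (\<lambda>n. U \<inter> E n))" by (rule countable_image) simp
  have nd2: "\<forall>N\<in>range (\<lambda>n. U \<inter> E n). nowhere_dense N" using nd by blast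
  have "meager U" unfolding meager_def using eq c nd2 by blast
  thus False using assms(1-3) unfolding baire_space_def by blast
qed

lemma meets_open:
  fixes S :: "'a::topological_space set"
  assumes "interior (closure S) \<noteq> {}" "S \<subseteq> U" "open U"
  shows "\<exists>x. x \<in> interior (closure S) \<inter> U"
proof -
  have "interior (closure S) \<inter> closure U \<noteq> {}"
    using assms(1,2) interior_subset closure_mono by blast
  hence "interior (closure S) \<inter> U \<noteq> {}"
    using open_Int_closure_eq_empty[of "interior (closure S)" U] by auto
  thus ?thesis by blast
qed

lemma ediam_le:
  assumes "\<And>p q. p \<in> S \<Longrightarrow> q \<in> S \<Longrightarrow> dist p q \<le> c"
  shows "ediam S \<le> ereal c"
  unfolding ediam_def using assms by (intro SUP_least) auto

lemma ediam_mono: "S \<subseteq> T \<Longrightarrow> ediam S \<le> ediam T"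
  unfolding ediam_def by (rule SUP_subset_mono) auto

lemma discrete_closed_union:
  fixes D :: "'a::topological_space set set"
  assumes "discrete_family D" "\<forall>A\<in>D. closed A"
  shows "closed (\<Union>D)"
  unfolding closed_def
proof (rule iffD2[OF open_subopen], intro ballI)
  fix x assume x: "x \<in> - \<Union>D"
  obtain V where V: "open V" "x \<in> V"
    "\<forall>A\<in>D. \<forall>B\<in>D. A \<inter> V \<noteq> {} \<and> B \<inter> V \<noteq> {} \<longrightarrow> A = B"
  proof -
    have "\<exists>U. open U \<and> x \<in> U \<and> (\<forall>A\<in>D. \<forall>B\<in>D. A \<inter> U \<noteq> {} \<and> B \<inter> U \<noteq> {} \<longrightarrow> A = B)"
      using assms(1) unfolding discrete_family_def by (rule spec)
    then show ?thesis using that by (elim exE conjE)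
  qed
  show "\<exists>T. open T \<and> x \<in> T \<and> T \<subseteq> - \<Union>D"
  proof (cases "\<exists>A\<in>D. A \<inter> V \<noteq> {}")
    case True
    then obtain A where A: "A \<in> D" "A \<inter> V \<noteq> {}" by blast
    have "open (V - A)" using V(1) assms(2) A(1) by auto
    moreover have "V - A \<subseteq> - \<Union>D"
    proof
      fix y assume y: "y \<in> V - A"
      show "y \<in> - \<Union>D"
      proof
        assume "y \<in> \<Union>D"
        then obtain B where B: "B \<in> D" "y \<in> B" by blast
        have "B \<inter> V \<noteq> {}" using B(2) y by blast
        hence "B = A" using V(3) A B(1) by blast
        thus False using B(2) y by blast
      qed
    qed
    moreover have "x \<in> V - A" using x V(2) A(1) by blast
    ultimately show ?thesis by blast
  next
    case False
    thus ?thesis using V by blast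
  qed
qed

lemma part1:
  fixes \<F> :: "('a::topological_space \<Rightarrow> 'b::metric_space) set"
  assumes B: "baire_space TYPE('a)" and G: "equi_GLP \<F>"
  shows "equi_cliquish \<F>"
  unfolding equi_cliquish_def
proof (intro allI impI)
  fix \<epsilon> :: real and U :: "'a set"
  assume e: "\<epsilon> > 0" and U: "open U \<and> U \<noteq> {}"
  obtain \<A> where A: "sigma_discrete \<A>" "\<forall>A\<in>\<A>. closed A" "\<Union>\<A> = UNIV"
    "\<forall>A\<in>\<A>. \<forall>f\<in>\<F>. ediam (f ` A) \<le> ereal (\<epsilon>/2)"
  proof -
    have "\<exists>\<A>. sigma_discrete \<A> \<and> (\<forall>A\<in>\<A>. closed A) \<and> \<Union>\<A> = UNIV \<and>
        (\<forall>A\<in>\<A>. \<forall>f\<in>\<F>. ediam (f ` A) \<le> ereal (\<epsilon>/2))"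
      using G[unfolded equi_GLP_def, rule_format, OF half_gt_zero[OF e]] .
    then show ?thesis using that by (elim exE conjE)
  qed
  obtain D :: "nat \<Rightarrow> 'a set set" where D: "\<forall>n. discrete_family (D n)" "\<A> = (\<Union>n. D n)"
  proof -
    have "\<exists>D::nat \<Rightarrow> 'a set set. (\<forall>n. discrete_family (D n)) \<and> \<A> = (\<Union>n. D n)"
      using A(1) unfolding sigma_discrete_def .
    then show ?thesis using that by (elim exE conjE)
  qed
  have "U \<subseteq> (\<Union>n. \<Union>(D n))" using A(3) D(2) by blast
  then obtain n where n: "interior (closure (U \<inter> \<Union>(D n))) \<noteq> {}"
    using baire_cover[OF B] U by blast
  define W where "W = interior (closure (U \<inter> \<Union>(D n)))"
  have cl: "closed (\<Union>(D n))"
    using discrete_closed_union[of "D n"] D A(2) by blast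
  have WE: "W \<subseteq> \<Union>(D n)" unfolding W_def
    using interior_subset closure_minimal[OF _ cl, of "U \<inter> \<Union>(D n)"] by blast
  obtain x where x: "x \<in> W \<inter> U" using meets_open[OF n _, of U] U unfolding W_def by blast
  then obtain A0 where A0: "A0 \<in> D n" "x \<in> A0" using WE by blast
  obtain V where V: "open V" "x \<in> V"
    "\<forall>A\<in>D n. \<forall>B\<in>D n. A \<inter> V \<noteq> {} \<and> B \<inter> V \<noteq> {} \<longrightarrow> A = B"
  proof -
    have "\<exists>U. open U \<and> x \<in> U \<and> (\<forall>A\<in>D n. \<forall>B\<in>D n. A \<inter> U \<noteq> {} \<and> B \<inter> U \<noteq> {} \<longrightarrow> A = B)"
      using spec[OF D(1), of n] unfolding discrete_family_def by (rule spec)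
    then show ?thesis using that by (elim exE conjE)
  qed
  define Ob where "Ob = W \<inter> U \<inter> V"
  have "Ob \<subseteq> A0"
  proof
    fix y assume y: "y \<in> Ob"
    then obtain B where "B \<in> D n" "y \<in> B" using WE unfolding Ob_def by blast
    moreover have "y \<in> V" using y Ob_def by blast
    ultimately have "B = A0" using V(3) A0 V(2) by blast
    thus "y \<in> A0" using \<open>y \<in> B\<close> by simp
  qed
  have "open Ob" unfolding Ob_def W_def using U V(1) by auto
  moreover have "Ob \<noteq> {}" using x V(2) Ob_def by blast
  moreover have "Ob \<subseteq> U" unfolding Ob_def by blast
  moreover have "\<forall>f\<in>\<F>. ediam (f ` Ob) < ereal \<epsilon>"
  proof
    fix f assume f: "f \<in> \<F>"
    have "ediam (f ` Ob) \<le> ediam (f ` A0)" using \<open>Ob \<subseteq> A0\<close> by (intro ediam_mono) auto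
    also have "\<dots> \<le> ereal (\<epsilon>/2)" using A(4) A0(1) D(2) f by blast
    also have "\<dots> < ereal \<epsilon>" using e by simp
    finally show "ediam (f ` Ob) < ereal \<epsilon>" .
  qed
  ultimately show "\<exists>V. open V \<and> V \<noteq> {} \<and> V \<subseteq> U \<and> (\<forall>f\<in>\<F>. ediam (f ` V) < ereal \<epsilon>)"
    by (intro exI[of _ Ob] conjI)
qed

lemma part2:
  fixes \<G> :: "('c::metric_space \<Rightarrow> 'd::metric_space) set"
  assumes B: "baire_space TYPE('c)" and G: "equi_Baire1 \<G>"
  shows "equi_cliquish \<G>"
  unfolding equi_cliquish_def
proof (intro allI impI)
  fix \<epsilon> :: real and U :: "'c set"
  assume e: "\<epsilon> > 0" and U: "open U \<and> U \<noteq> {}"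
  obtain \<delta> :: "'c \<Rightarrow> real" where d: "\<forall>x. \<delta> x > 0"
    "\<forall>x y. \<forall>f\<in>\<G>. dist x y < min (\<delta> x) (\<delta> y) \<longrightarrow> dist (f x) (f y) < \<epsilon>/4"
  proof -
    have "\<epsilon>/4 > 0" using e by simp
    hence "\<exists>\<delta>::'c \<Rightarrow> real. (\<forall>x. \<delta> x > 0) \<and>
        (\<forall>x y. \<forall>f\<in>\<G>. dist x y < min (\<delta> x) (\<delta> y) \<longrightarrow> dist (f x) (f y) < \<epsilon>/4)"
      using G[unfolded equi_Baire1_def, rule_format] by blast
    then show ?thesis using that by (elim exE conjE)
  qed
  define E where "E n = {x. \<delta> x > 1 / real (Suc n)}" for n
  have "U \<subseteq> (\<Union>n. E n)"
  proof
    fix x assume "x \<in> U"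
    obtain m where m: "m > 0" "inverse (real m) < \<delta> x" using ex_inverse_of_nat_less d(1) by blast
    hence "Suc (m - 1) = m" by simp
    hence "x \<in> E (m - 1)" unfolding E_def using m by (simp add: field_simps)
    thus "x \<in> (\<Union>n. E n)" by blast
  qed
  then obtain n where n: "interior (closure (U \<inter> E n)) \<noteq> {}"
    using baire_cover[OF B] U by blast
  define W where "W = interior (closure (U \<inter> E n))"
  obtain x where x: "x \<in> W \<inter> U" using meets_open[OF n _, of U] U unfolding W_def by blast
  have "open (W \<inter> U)" unfolding W_def using U by auto
  then obtain r where r: "r > 0" "ball x r \<subseteq> W \<inter> U" using x open_contains_ball by blast
  define r' where "r' = min r (1 / (2 * real (Suc n)))"
  have r'pos: "r' > 0" using r unfolding r'_def by simp
  define Ob where "Ob = ball x r'"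
  have OWU: "Ob \<subseteq> W \<inter> U" using r unfolding Ob_def r'_def by auto
  have approx: "\<exists>y'. y' \<in> Ob \<and> y' \<in> E n \<and> dist (f y) (f y') < \<epsilon>/4"
    if y: "y \<in> Ob" and f: "f \<in> \<G>" for y f
  proof -
    define s where "s = min (\<delta> y) (1 / real (Suc n))"
    have spos: "s > 0" using d(1) unfolding s_def by simp
    have "y \<in> closure (U \<inter> E n)" using y OWU interior_subset unfolding W_def by blast
    moreover have "y \<in> ball y s \<inter> Ob" using y spos by simp
    ultimately have "(ball y s \<inter> Ob) \<inter> closure (U \<inter> E n) \<noteq> {}" by blast
    hence "(ball y s \<inter> Ob) \<inter> (U \<inter> E n) \<noteq> {}"
      using open_Int_closure_eq_empty[of "ball y s \<inter> Ob" "U \<inter> E n"] unfolding Ob_def by auto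
    then obtain y' where y': "y' \<in> Ob" "y' \<in> E n" "dist y y' < s" by auto
    have "\<delta> y' > 1 / real (Suc n)" using y'(2) unfolding E_def by simp
    hence "dist y y' < min (\<delta> y) (\<delta> y')" using y'(3) unfolding s_def by auto
    hence "dist (f y) (f y') < \<epsilon>/4" using d(2) f by blast
    thus ?thesis using y' by blast
  qed
  have "open Ob" unfolding Ob_def by simp
  moreover have "Ob \<noteq> {}" using r'pos unfolding Ob_def by simp
  moreover have "Ob \<subseteq> U" using OWU by blast
  moreover have "\<forall>f\<in>\<G>. ediam (f ` Ob) < ereal \<epsilon>"
  proof
    fix f assume f: "f \<in> \<G>"
    have "ediam (f ` Ob) \<le> ereal (3 * \<epsilon> / 4)"
    proof (rule ediam_le)
      fix p q assume "p \<in> f ` Ob" "q \<in> f ` Ob"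
      then obtain y z where yz: "y \<in> Ob" "z \<in> Ob" "p = f y" "q = f z" by blast
      obtain y' where y': "y' \<in> Ob" "y' \<in> E n" "dist (f y) (f y') < \<epsilon>/4"
        using approx[OF yz(1) f] by blast
      obtain z' where z': "z' \<in> Ob" "z' \<in> E n" "dist (f z) (f z') < \<epsilon>/4"
        using approx[OF yz(2) f] by blast
      have "dist y' z' \<le> dist y' x + dist x z'" by (rule dist_triangle)
      also have "\<dots> < r' + r'" using y'(1) z'(1) unfolding Ob_def by (auto simp: dist_commute)
      also have "\<dots> \<le> 1 / real (Suc n)" unfolding r'_def by (simp add: min_def field_simps)
      finally have "dist y' z' < 1 / real (Suc n)" .
      moreover have "\<delta> y' > 1 / real (Suc n)" "\<delta> z' > 1 / real (Suc n)"
        using y'(2) z'(2) unfolding E_def by auto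
      ultimately have "dist y' z' < min (\<delta> y') (\<delta> z')" by simp
      hence "dist (f y') (f z') < \<epsilon>/4" using d(2) f by blast
      have t1: "dist (f y) (f z) \<le> dist (f y) (f y') + dist (f y') (f z)" by (rule dist_triangle)
      have t2: "dist (f y') (f z) \<le> dist (f y') (f z') + dist (f z') (f z)" by (rule dist_triangle)
      have "dist (f y) (f z) \<le> dist (f y) (f y') + dist (f y') (f z') + dist (f z') (f z)"
        using t1 t2 by linarith
      thus "dist p q \<le> 3 * \<epsilon> / 4" using yz y'(3) z'(3) \<open>dist (f y') (f z') < \<epsilon>/4\<close>
        by (simp add: dist_commute)
    qed
    also have "\<dots> < ereal \<epsilon>" using e by simp
    finally show "ediam (f ` Ob) < ereal \<epsilon>" .
  qed
  ultimately show "\<exists>V. open V \<and> V \<noteq> {} \<and> V \<subseteq> U \<and> (\<forall>f\<in>\<G>. ediam (f ` V) < ereal \<epsilon>)"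
    by (intro exI[of _ Ob] conjI)
qed

theorem proposition3p6:
  fixes \<F> :: "('a::topological_space \<Rightarrow> 'b::metric_space) set"
    and \<G> :: "('c::metric_space \<Rightarrow> 'd::metric_space) set"
  shows "(baire_space TYPE('a) \<longrightarrow> equi_GLP \<F> \<longrightarrow> equi_cliquish \<F>)
       \<and> (baire_space TYPE('c) \<longrightarrow> equi_Baire1 \<G> \<longrightarrow> equi_cliquish \<G>)"
proof (intro conjI impI)
  show "equi_cliquish \<F>" if "baire_space TYPE('a)" "equi_GLP \<F>" using part1 that .
  show "equi_cliquish \<G>" if "baire_space TYPE('c)" "equi_Baire1 \<G>" using part2 that .
qed

end
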